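(* Let $\eta>0$, let $X^\eta$ be the unique minimizer of $g_\eta$ over $\mathbb{R}^{n\times n}_+$, let $X_f$ be any minimizer of $f$ over $\mathbb{R}^{n\times n}_+$, and let $(\mathbf u^*,\mathbf v^* )$ be the $(\mathbf u,\mathbf v)$-part of an optimal solution of the dual problem $\max_{(\mathbf u,\mathbf v,\mathbf t)\in\mathcal X}\{-\frac{1}{4\eta}\sum_{ij}t_{ij}^2-\tau\langle e^{-\mathbf u/\tau},\mathbf a\rangle-\tau\langle e^{-\mathbf v/\tau},\mathbf b\rangle+\mathbf a^\top\mathbf 1_n+\mathbf b^\top\mathbf 1_n\}$ with $\mathcal X=\{(\mathbf u,\mathbf v,\mathbf t):t_{ij}\ge0,\ t_{ij}\ge u_i+v_j-C_{ij}\}$. Let $D=\|C\|_\infty+\eta(\alpha+\beta)+\tau\log\big(\frac{\alpha+\beta}{2}\big)-\tau\min\{\log a_{min},\log b_{min}\}$. Then: (i) $\|X^\eta\|_1\le\frac{\alpha+\beta}{2}$ and $\|X_f\|_1\le\frac{\alpha+\beta}{2}$; (ii) $u^*_i\ge\tau\log\big(\frac{2a_i}{\alpha+\beta}\big)$ and $v^*_j\ge\tau\log\big(\frac{2b_j}{\alpha+\beta}\big)$ for all $i,j\in[n]$; (iii) $\|\mathbf u^*\|_\infty\le D$ and $\|\mathbf v^*\|_\infty\le D$; (iv) $\min_{i,j}\big\{\sum_{k}X^\eta_{ik},\sum_k X^\eta_{kj}\big\}\ge\min\{a_{min},b_{min}\}e^{-D/\tau}$.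
   Context: Let $n\ge1$, $C\in\mathbb{R}^{n\times n}$ with nonnegative entries and $\|C\|_\infty=\max_{i,j}|C_{ij}|$; $\mathbf a,\mathbf b\in\mathbb{R}^n$ with strictly positive entries, $\alpha=\sum_i a_i$, $\beta=\sum_i b_i$, $a_{min}=\min_i a_i$, $b_{min}=\min_i b_i$; $\tau>0$. For $\mathbf x\in\mathbb{R}^n_+$ and $\mathbf y$ with positive entries, $\mathbf{KL}(\mathbf x\|\mathbf y)=\sum_i x_i\log(x_i/y_i)-x_i+y_i$ (with $0\log0=0$). $\|X\|_1=\sum_{ij}|X_{ij}|$, $\|X\|_2$ is the Frobenius norm, $\mathbf 1_n$ the all-ones vector, $e^{-\mathbf u/\tau}$ the entrywise exponential. $f(X)=\langle C,X\rangle+\tau\mathbf{KL}(X\mathbf 1_n\|\mathbf a)+\tau\mathbf{KL}(X^\top\mathbf 1_n\|\mathbf b)$ for $X\in\mathbb{R}^{n\times n}_+$, and $g_\eta(X)=f(X)+\eta\|X\|_2^2$. *)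

theory Defs
  imports Complex_Main
begin

text \<open>Index set [n] is rendered as a finite type 'n (so n = CARD('n) \<ge> 1).
  Vectors are 'n \<Rightarrow> real, matrices are 'n \<Rightarrow> 'n \<Rightarrow> real.\<close>

definition KL :: "('n::finite \<Rightarrow> real) \<Rightarrow> ('n \<Rightarrow> real) \<Rightarrow> real" where
  "KL x y = (\<Sum>i\<in>UNIV. (if x i = 0 then 0 else x i * ln (x i / y i)) - x i + y i)"

definition rowsum :: "('n::finite \<Rightarrow> 'n \<Rightarrow> real) \<Rightarrow> 'n \<Rightarrow> real" where
  "rowsum X i = (\<Sum>k\<in>UNIV. X i k)"

definition colsum :: "('n::finite \<Rightarrow> 'n \<Rightarrow> real) \<Rightarrow> 'n \<Rightarrow> real" where
  "colsum X j = (\<Sum>k\<in>UNIV. X k j)"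

definition nonneg_mat :: "('n::finite \<Rightarrow> 'n \<Rightarrow> real) \<Rightarrow> bool" where
  "nonneg_mat X \<longleftrightarrow> (\<forall>i j. X i j \<ge> 0)"

definition frob_inner :: "('n::finite \<Rightarrow> 'n \<Rightarrow> real) \<Rightarrow> ('n \<Rightarrow> 'n \<Rightarrow> real) \<Rightarrow> real" where
  "frob_inner A B = (\<Sum>i\<in>UNIV. \<Sum>j\<in>UNIV. A i j * B i j)"

definition norm1_mat :: "('n::finite \<Rightarrow> 'n \<Rightarrow> real) \<Rightarrow> real" where
  "norm1_mat X = (\<Sum>i\<in>UNIV. \<Sum>j\<in>UNIV. \<bar>X i j\<bar>)"

definition frob_sq :: "('n::finite \<Rightarrow> 'n \<Rightarrow> real) \<Rightarrow> real" where
  "frob_sq X = (\<Sum>i\<in>UNIV. \<Sum>j\<in>UNIV. (X i j)\<^sup>2)"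

definition maxnorm_mat :: "('n::finite \<Rightarrow> 'n \<Rightarrow> real) \<Rightarrow> real" where
  "maxnorm_mat C = Max {\<bar>C i j\<bar> | i j. True}"

definition maxnorm_vec :: "('n::finite \<Rightarrow> real) \<Rightarrow> real" where
  "maxnorm_vec u = Max {\<bar>u i\<bar> | i. True}"

definition uot_f :: "('n::finite \<Rightarrow> 'n \<Rightarrow> real) \<Rightarrow> ('n \<Rightarrow> real) \<Rightarrow> ('n \<Rightarrow> real) \<Rightarrow> real
    \<Rightarrow> ('n \<Rightarrow> 'n \<Rightarrow> real) \<Rightarrow> real" where
  "uot_f C a b \<tau> X = frob_inner C X + \<tau> * KL (rowsum X) a + \<tau> * KL (colsum X) b"

definition uot_g :: "('n::finite \<Rightarrow> 'n \<Rightarrow> real) \<Rightarrow> ('n \<Rightarrow> real) \<Rightarrow> ('n \<Rightarrow> real) \<Rightarrow> real \<Rightarrow> real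
    \<Rightarrow> ('n \<Rightarrow> 'n \<Rightarrow> real) \<Rightarrow> real" where
  "uot_g C a b \<tau> \<eta> X = uot_f C a b \<tau> X + \<eta> * frob_sq X"

definition dual_feasible :: "('n::finite \<Rightarrow> 'n \<Rightarrow> real) \<Rightarrow> ('n \<Rightarrow> real) \<Rightarrow> ('n \<Rightarrow> real)
    \<Rightarrow> ('n \<Rightarrow> 'n \<Rightarrow> real) \<Rightarrow> bool" where
  "dual_feasible C u v t \<longleftrightarrow> (\<forall>i j. t i j \<ge> 0 \<and> t i j \<ge> u i + v j - C i j)"

definition dual_obj :: "('n::finite \<Rightarrow> real) \<Rightarrow> ('n \<Rightarrow> real) \<Rightarrow> real \<Rightarrow> real
    \<Rightarrow> ('n \<Rightarrow> real) \<Rightarrow> ('n \<Rightarrow> real) \<Rightarrow> ('n \<Rightarrow> 'n \<Rightarrow> real) \<Rightarrow> real" where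
  "dual_obj a b \<tau> \<eta> u v t =
     - (1 / (4 * \<eta>)) * (\<Sum>i\<in>UNIV. \<Sum>j\<in>UNIV. (t i j)\<^sup>2)
     - \<tau> * (\<Sum>i\<in>UNIV. exp (- u i / \<tau>) * a i)
     - \<tau> * (\<Sum>j\<in>UNIV. exp (- v j / \<tau>) * b j)
     + (\<Sum>i\<in>UNIV. a i) + (\<Sum>j\<in>UNIV. b j)"

end

theory Submission
  imports Defs
begin


definition ent :: "real \<Rightarrow> real \<Rightarrow> real" where
  "ent x y = (if x = 0 then 0 else x * ln (x / y))"

lemma KL_ent: "KL x y = (\<Sum>i\<in>UNIV. ent (x i) (y i) - x i + y i)"
  by (simp add: KL_def ent_def)

lemma sum_if_eq:
  fixes f g :: "'n::finite \<Rightarrow> real"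
  shows "(\<Sum>k\<in>UNIV. if k = i then g k else f k) = (\<Sum>k\<in>UNIV. f k) + (g i - f i)"
proof -
  have "(\<Sum>k\<in>UNIV. if k = i then g k else f k) = (\<Sum>k\<in>UNIV. f k + (if k = i then g k - f k else 0))"
    by (rule sum.cong) auto
  also have "\<dots> = (\<Sum>k\<in>UNIV. f k) + (g i - f i)" by (simp add: sum.distrib)
  finally show ?thesis .
qed

lemma ln_strict: fixes s :: real assumes "0 < s" "s \<noteq> 1" shows "ln s < s - 1"
proof -
  have q: "sqrt s > 0" using assms by simp
  have "ln s = 2 * ln (sqrt s)" using assms by (simp add: ln_sqrt)
  also have "\<dots> \<le> 2 * (sqrt s - 1)" using ln_le_minus_one[OF q] by simp
  also have "\<dots> < s - 1"
  proof -
    have "sqrt s \<noteq> 1" using assms by auto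
    hence "(sqrt s - 1)^2 > 0" by simp
    moreover have "(sqrt s)^2 = s" using assms by simp
    ultimately show ?thesis by (simp add: power2_eq_square algebra_simps)
  qed
  finally show ?thesis .
qed

lemma ent_lb:
  assumes "x \<ge> 0" "y > 0" "k > 0"
  shows "ent x y \<ge> x * ln k + x - y * k"
proof (cases "x = 0")
  case True thus ?thesis using assms by (simp add: ent_def)
next
  case False
  hence x: "x > 0" using assms by simp
  have "ln (y * k / x) \<le> y * k / x - 1" by (rule ln_le_minus_one) (use x assms in simp)
  moreover have "ln (y * k / x) = ln y + ln k - ln x" using x assms by (simp add: ln_div ln_mult)
  moreover have "ln (x / y) = ln x - ln y" using x assms by (simp add: ln_div)
  ultimately have "ln (x/y) \<ge> ln k + 1 - y * k / x" by linarith
  hence "x * ln (x/y) \<ge> x * (ln k + 1 - y * k / x)" using x by (simp add: mult_left_mono)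
  also have "x * (ln k + 1 - y * k / x) = x * ln k + x - y * k" using x by (simp add: field_simps)
  finally show ?thesis using False by (simp add: ent_def)
qed

lemma logsum:
  fixes r a :: "'n::finite \<Rightarrow> real"
  assumes "\<forall>i. r i \<ge> 0" "\<forall>i. a i > 0" "(\<Sum>i\<in>UNIV. r i) = m" "m > 0"
  shows "(\<Sum>i\<in>UNIV. ent (r i) (a i)) \<ge> m * ln (m / (\<Sum>i\<in>UNIV. a i))"
proof -
  define A where "A = (\<Sum>i\<in>UNIV. a i)"
  have A: "A > 0" unfolding A_def using assms(2) by (simp add: sum_pos)
  define k where "k = m / A"
  have k: "k > 0" using A assms by (simp add: k_def)
  have "(\<Sum>i\<in>UNIV. ent (r i) (a i)) \<ge> (\<Sum>i\<in>UNIV. r i * ln k + r i - a i * k)"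
    by (rule sum_mono) (use ent_lb assms k in auto)
  also have "(\<Sum>i\<in>UNIV. r i * ln k + r i - a i * k) = m * ln k + m - A * k"
    using assms(3) by (simp add: A_def sum.distrib sum_subtractf sum_distrib_right[symmetric])
  also have "\<dots> = m * ln k" using A by (simp add: k_def)
  finally show ?thesis by (simp add: k_def A_def)
qed

lemma ent_scale:
  assumes "s > 0" "x \<ge> 0" "y > 0"
  shows "ent (s * x) y = s * ent x y + s * x * ln s"
proof (cases "x = 0")
  case True thus ?thesis by (simp add: ent_def)
next
  case False
  hence x: "x > 0" using assms by simp
  have "ln (s * x / y) = ln s + ln (x / y)" using x assms by (simp add: ln_div ln_mult)
  thus ?thesis using x assms by (simp add: ent_def algebra_simps)
qed

lemma ent_pert:
  assumes "x \<ge> 0" "y > 0" "e > 0"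
  shows "ent (x + e) y - ent x y - e \<le> e * ln ((x + e) / y)"
proof (cases "x = 0")
  case True thus ?thesis using assms by (simp add: ent_def)
next
  case False
  hence x: "x > 0" using assms by simp
  have l: "ln ((x + e) / y) - ln (x / y) = ln ((x+e)/x)" using x assms by (simp add: ln_div)
  have "ln ((x+e)/x) \<le> (x+e)/x - 1" by (rule ln_le_minus_one) (use x assms in simp)
  hence "x * ln ((x+e)/x) \<le> x * ((x+e)/x - 1)" using x by (simp add: mult_left_mono)
  also have "\<dots> = e" using x by (simp add: field_simps)
  finally have "x * (ln ((x + e) / y) - ln (x / y)) \<le> e" using l by simp
  moreover have "x + e \<noteq> 0" using x assms by simp
  ultimately show ?thesis using False by (simp add: ent_def algebra_simps)
qed




lemma rowsum_nonneg: "nonneg_mat X \<Longrightarrow> rowsum X i \<ge> 0"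
  by (simp add: rowsum_def nonneg_mat_def sum_nonneg)
lemma colsum_nonneg: "nonneg_mat X \<Longrightarrow> colsum X i \<ge> 0"
  by (simp add: colsum_def nonneg_mat_def sum_nonneg)
lemma norm1_row: "nonneg_mat X \<Longrightarrow> norm1_mat X = (\<Sum>i\<in>UNIV. rowsum X i)"
  by (simp add: norm1_mat_def rowsum_def nonneg_mat_def)
lemma norm1_col: "nonneg_mat X \<Longrightarrow> norm1_mat X = (\<Sum>i\<in>UNIV. colsum X i)"
  by (simp add: norm1_mat_def colsum_def nonneg_mat_def) (rule sum.swap)
lemma row_le_norm1: "nonneg_mat X \<Longrightarrow> rowsum X i \<le> norm1_mat X"
  by (simp add: norm1_row member_le_sum rowsum_nonneg)
lemma col_le_norm1: "nonneg_mat X \<Longrightarrow> colsum X i \<le> norm1_mat X"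
  by (simp add: norm1_col member_le_sum colsum_nonneg)
lemma entry_le_row: "nonneg_mat X \<Longrightarrow> X i j \<le> rowsum X i"
  unfolding rowsum_def nonneg_mat_def by (rule member_le_sum) auto

lemma ident_aux:
  fixes s :: real
  shows "(s * FC + \<tau> * (s * Er + s * L * m - s * m + \<alpha>)
      + \<tau> * (s * Ec + s * L * m - s * m + \<beta>) + \<eta> * (s\<^sup>2 * F2)) - (FC + \<tau> * (Er - m + \<alpha>) + \<tau> * (Ec - m + \<beta>) + \<eta> * F2)
      = (s - 1) * FC + \<tau> * ((s - 1) * (Er + Ec) + 2 * s * L * m - 2 * (s - 1) * m) + \<eta> * ((s\<^sup>2 - 1) * F2)"
  by (simp add: algebra_simps)

lemma primal_mass:
  fixes C X :: "'n::finite \<Rightarrow> 'n \<Rightarrow> real" and a b :: "'n \<Rightarrow> real"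
  assumes C: "\<forall>i j. C i j \<ge> 0" and apos: "\<forall>i. a i > 0" and bpos: "\<forall>i. b i > 0"
    and tau: "\<tau> > 0" and eta: "\<eta> \<ge> 0" and X: "nonneg_mat X"
    and opt: "\<forall>Y. nonneg_mat Y \<longrightarrow> uot_g C a b \<tau> \<eta> X \<le> uot_g C a b \<tau> \<eta> Y"
  shows "norm1_mat X \<le> ((\<Sum>i\<in>UNIV. a i) + (\<Sum>i\<in>UNIV. b i)) / 2"
proof (rule ccontr)
  define \<alpha> where "\<alpha> = (\<Sum>i\<in>UNIV. a i)"
  define \<beta> where "\<beta> = (\<Sum>i\<in>UNIV. b i)"
  define m where "m = norm1_mat X"
  assume "\<not> ?thesis"
  hence mM: "m > (\<alpha> + \<beta>) / 2" by (simp add: m_def \<alpha>_def \<beta>_def)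
  have al: "\<alpha> > 0" unfolding \<alpha>_def using apos by (simp add: sum_pos)
  have be: "\<beta> > 0" unfolding \<beta>_def using bpos by (simp add: sum_pos)
  have m0: "m > 0" using mM al be by (smt (verit) divide_pos_pos)
  have "\<alpha> * \<beta> \<le> ((\<alpha> + \<beta>)/2)^2"
  proof -
    have "0 \<le> (\<alpha> - \<beta>)^2" by simp
    thus ?thesis by (simp add: power2_eq_square algebra_simps)
  qed
  also have "\<dots> < m^2" using mM al be by (intro power_strict_mono) auto
  finally have ab: "\<alpha> * \<beta> < m^2" .
  define la where "la = ln (m / \<alpha>)"
  define lb where "lb = ln (m / \<beta>)"
  have "la + lb = ln (m^2 / (\<alpha> * \<beta>))" using al be m0
    by (simp add: la_def lb_def ln_div ln_mult power2_eq_square)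
  moreover have "m^2 / (\<alpha> * \<beta>) > 1" using ab al be by simp
  ultimately have lab: "la + lb > 0" by simp
  define s where "s = exp (- (la + lb) / 2)"
  have s0: "s > 0" by (simp add: s_def)
  have s1: "s < 1" using lab by (simp add: s_def)
  have lns: "ln s = - (la + lb) / 2" by (simp add: s_def)
  define Y where "Y = (\<lambda>i j. s * X i j)"
  have Y: "nonneg_mat Y" using X s0 by (simp add: Y_def nonneg_mat_def)
  have rY: "rowsum Y = (\<lambda>i. s * rowsum X i)" by (simp add: Y_def rowsum_def fun_eq_iff sum_distrib_left)
  have cY: "colsum Y = (\<lambda>i. s * colsum X i)" by (simp add: Y_def colsum_def fun_eq_iff sum_distrib_left)
  define Er where "Er = (\<Sum>i\<in>UNIV. ent (rowsum X i) (a i))"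
  define Ec where "Ec = (\<Sum>i\<in>UNIV. ent (colsum X i) (b i))"
  define FC where "FC = frob_inner C X"
  define F2 where "F2 = frob_sq X"
  have FC0: "FC \<ge> 0" using C X by (simp add: FC_def frob_inner_def nonneg_mat_def sum_nonneg)
  have F20: "F2 \<ge> 0" by (simp add: F2_def frob_sq_def sum_nonneg)
  have sr: "(\<Sum>i\<in>UNIV. rowsum X i) = m" using X by (simp add: m_def norm1_row)
  have sc: "(\<Sum>i\<in>UNIV. colsum X i) = m" using X by (simp add: m_def norm1_col)
  have KLr: "KL (rowsum X) a = Er - m + \<alpha>"
    by (simp add: KL_ent Er_def sum.distrib sum_subtractf sr \<alpha>_def)
  have KLc: "KL (colsum X) b = Ec - m + \<beta>"
    by (simp add: KL_ent Ec_def sum.distrib sum_subtractf sc \<beta>_def)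
  have KLrY: "KL (rowsum Y) a = s * Er + s * ln s * m - s * m + \<alpha>"
  proof -
    have "KL (rowsum Y) a = (\<Sum>i\<in>UNIV. (s * ent (rowsum X i) (a i) + s * rowsum X i * ln s) - s * rowsum X i + a i)"
      unfolding KL_ent rY using ent_scale s0 rowsum_nonneg[OF X] apos by simp
    also have "\<dots> = (\<Sum>i\<in>UNIV. s * ent (rowsum X i) (a i)) + (\<Sum>i\<in>UNIV. (s * ln s) * rowsum X i) - (\<Sum>i\<in>UNIV. s * rowsum X i) + (\<Sum>i\<in>UNIV. a i)"
      by (simp add: sum.distrib sum_subtractf algebra_simps)
    also have "\<dots> = s * Er + s * ln s * m - s * m + \<alpha>"
      by (simp only: sum_distrib_left[symmetric] sr Er_def \<alpha>_def)
    finally show ?thesis .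
  qed
  have KLcY: "KL (colsum Y) b = s * Ec + s * ln s * m - s * m + \<beta>"
  proof -
    have "KL (colsum Y) b = (\<Sum>i\<in>UNIV. (s * ent (colsum X i) (b i) + s * colsum X i * ln s) - s * colsum X i + b i)"
      unfolding KL_ent cY using ent_scale s0 colsum_nonneg[OF X] bpos by simp
    also have "\<dots> = (\<Sum>i\<in>UNIV. s * ent (colsum X i) (b i)) + (\<Sum>i\<in>UNIV. (s * ln s) * colsum X i) - (\<Sum>i\<in>UNIV. s * colsum X i) + (\<Sum>i\<in>UNIV. b i)"
      by (simp add: sum.distrib sum_subtractf algebra_simps)
    also have "\<dots> = s * Ec + s * ln s * m - s * m + \<beta>"
      by (simp only: sum_distrib_left[symmetric] sc Ec_def \<beta>_def)
    finally show ?thesis .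
  qed
  have FCY: "frob_inner C Y = s * FC"
    by (simp add: FC_def frob_inner_def Y_def sum_distrib_left algebra_simps)
  have F2Y: "frob_sq Y = s^2 * F2"
    by (simp add: F2_def frob_sq_def Y_def sum_distrib_left power_mult_distrib)
  have gX: "uot_g C a b \<tau> \<eta> X = FC + \<tau> * (Er - m + \<alpha>) + \<tau> * (Ec - m + \<beta>) + \<eta> * F2"
    by (simp add: uot_g_def uot_f_def FC_def F2_def KLr KLc)
  have gY: "uot_g C a b \<tau> \<eta> Y = s * FC + \<tau> * (s * Er + s * ln s * m - s * m + \<alpha>)
      + \<tau> * (s * Ec + s * ln s * m - s * m + \<beta>) + \<eta> * (s^2 * F2)"
    by (simp add: uot_g_def uot_f_def FCY F2Y KLrY KLcY)
  have Erl: "Er \<ge> m * la"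
    unfolding Er_def la_def \<alpha>_def by (rule logsum) (use rowsum_nonneg[OF X] apos sr m0 in auto)
  have Ecl: "Ec \<ge> m * lb"
    unfolding Ec_def lb_def \<beta>_def by (rule logsum) (use colsum_nonneg[OF X] bpos sc m0 in auto)
  define L where "L = ln s"
  have P: "(s - 1) * (Er + Ec) \<le> (s - 1) * (m * la + m * lb)"
    using Erl Ecl s1 by - (rule mult_left_mono_neg, auto)
  have e1: "m * la + m * lb = m * (la + lb)" by (simp add: algebra_simps)
  have e2: "la + lb = - 2 * L" using lns by (simp add: L_def)
  have e3: "(s - 1) * (m * (- 2 * L)) + 2 * s * L * m - 2 * (s - 1) * m = 2 * m * (L - (s - 1))"
    by (simp add: algebra_simps)
  have br: "(s - 1) * (Er + Ec) + 2 * s * L * m - 2 * (s - 1) * m \<le> 2 * m * (L - (s - 1))"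
    using P e1 e2 e3 by simp
  have "L < s - 1" using ln_strict[OF s0] s1 by (simp add: L_def)
  hence "2 * m * (L - (s - 1)) < 0" using m0 by - (rule mult_pos_neg, auto)
  hence "(s - 1) * (Er + Ec) + 2 * s * L * m - 2 * (s - 1) * m < 0" using br by linarith
  hence T: "\<tau> * ((s - 1) * (Er + Ec) + 2 * s * L * m - 2 * (s - 1) * m) < 0"
    using tau by - (rule mult_pos_neg, auto)
  have T1: "(s - 1) * FC \<le> 0" using s1 FC0 by - (rule mult_nonpos_nonneg, auto)
  have "s^2 \<le> 1" using s0 s1 by - (rule power_le_one, auto)
  hence "(s^2 - 1) * F2 \<le> 0" using F20 by - (rule mult_nonpos_nonneg, auto)
  hence T2: "\<eta> * ((s^2 - 1) * F2) \<le> 0" using eta by - (rule mult_nonneg_nonpos, auto)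
  have "uot_g C a b \<tau> \<eta> Y - uot_g C a b \<tau> \<eta> X
      = (s - 1) * FC + \<tau> * ((s - 1) * (Er + Ec) + 2 * s * L * m - 2 * (s - 1) * m) + \<eta> * ((s^2 - 1) * F2)"
    using ident_aux[where s=s and L=L] gX gY by (simp add: L_def)
  hence "uot_g C a b \<tau> \<eta> Y < uot_g C a b \<tau> \<eta> X" using T T1 T2 by linarith
  moreover have "uot_g C a b \<tau> \<eta> X \<le> uot_g C a b \<tau> \<eta> Y" using opt Y by blast
  ultimately show False by linarith
qed



lemma dsum_delta:
  fixes f :: "'n::finite \<Rightarrow> 'n \<Rightarrow> real"
  shows "(\<Sum>k\<in>UNIV. \<Sum>l\<in>UNIV. (if k = i \<and> l = j then f k l else 0)) = f i j"
proof -
  have "\<And>k. (\<Sum>l\<in>UNIV. (if k = i \<and> l = j then f k l else 0)) = (if k = i then f k j else 0)"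
    by (auto simp: sum.delta)
  thus ?thesis by (simp add: sum.delta)
qed

lemma KL_upd:
  fixes x y :: "'n::finite \<Rightarrow> real"
  shows "KL (\<lambda>k. x k + (if k = i then e else 0)) y = KL x y + (ent (x i + e) (y i) - ent (x i) (y i) - e)"
proof -
  have "KL (\<lambda>k. x k + (if k = i then e else 0)) y =
     (\<Sum>k\<in>UNIV. if k = i then ent (x k + e) (y k) - (x k + e) + y k else ent (x k) (y k) - x k + y k)"
    unfolding KL_ent by (rule sum.cong) auto
  also have "\<dots> = KL x y + (ent (x i + e) (y i) - ent (x i) (y i) - e)"
    unfolding sum_if_eq KL_ent by simp
  finally show ?thesis .
qed

lemma primal_bracket:
  fixes C X :: "'n::finite \<Rightarrow> 'n \<Rightarrow> real" and a b :: "'n \<Rightarrow> real"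
  assumes apos: "\<forall>i. a i > 0" and bpos: "\<forall>i. b i > 0"
    and tau: "\<tau> > 0" and eta: "\<eta> \<ge> 0" and X: "nonneg_mat X"
    and opt: "\<forall>Y. nonneg_mat Y \<longrightarrow> uot_g C a b \<tau> \<eta> X \<le> uot_g C a b \<tau> \<eta> Y"
    and e: "e > 0"
  shows "0 \<le> C i j + \<eta> * (2 * X i j + e) + \<tau> * ln ((rowsum X i + e) / a i) + \<tau> * ln ((colsum X j + e) / b j)"
proof -
  define Y where "Y = (\<lambda>k l. X k l + (if k = i \<and> l = j then e else 0))"
  have Y: "nonneg_mat Y" using X e by (simp add: Y_def nonneg_mat_def)
  have rY: "rowsum Y = (\<lambda>k. rowsum X k + (if k = i then e else 0))"
    by (auto simp: fun_eq_iff Y_def rowsum_def sum.distrib sum.delta)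
  have cY: "colsum Y = (\<lambda>k. colsum X k + (if k = j then e else 0))"
    by (auto simp: fun_eq_iff Y_def colsum_def sum.distrib sum.delta)
  have FY: "frob_inner C Y = frob_inner C X + e * C i j"
  proof -
    have "frob_inner C Y = (\<Sum>k\<in>UNIV. \<Sum>l\<in>UNIV. C k l * X k l + (if k = i \<and> l = j then e * C k l else 0))"
      unfolding frob_inner_def Y_def by (intro sum.cong refl) (simp add: algebra_simps)
    also have "\<dots> = frob_inner C X + e * C i j"
      by (simp only: sum.distrib dsum_delta frob_inner_def)
    finally show ?thesis .
  qed
  have F2Y: "frob_sq Y = frob_sq X + (2 * e * X i j + e^2)"
  proof -
    have "frob_sq Y = (\<Sum>k\<in>UNIV. \<Sum>l\<in>UNIV. (X k l)^2 + (if k = i \<and> l = j then 2 * e * X k l + e^2 else 0))"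
      unfolding frob_sq_def Y_def by (intro sum.cong refl) (simp add: power2_eq_square algebra_simps)
    also have "\<dots> = frob_sq X + (2 * e * X i j + e^2)"
      by (simp only: sum.distrib dsum_delta frob_sq_def)
    finally show ?thesis .
  qed
  define r where "r = rowsum X i"
  define c where "c = colsum X j"
  have r0: "r \<ge> 0" using rowsum_nonneg[OF X] by (simp add: r_def)
  have c0: "c \<ge> 0" using colsum_nonneg[OF X] by (simp add: c_def)
  have dr: "ent (r + e) (a i) - ent r (a i) - e \<le> e * ln ((r + e) / a i)"
    using ent_pert r0 apos e by simp
  have dc: "ent (c + e) (b j) - ent c (b j) - e \<le> e * ln ((c + e) / b j)"
    using ent_pert c0 bpos e by simp
  have "uot_g C a b \<tau> \<eta> Y = uot_g C a b \<tau> \<eta> X + e * C i j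
      + \<tau> * (ent (r + e) (a i) - ent r (a i) - e) + \<tau> * (ent (c + e) (b j) - ent c (b j) - e)
      + \<eta> * (2 * e * X i j + e^2)"
    unfolding uot_g_def uot_f_def rY cY KL_upd FY F2Y r_def c_def by (simp add: algebra_simps)
  moreover have "uot_g C a b \<tau> \<eta> X \<le> uot_g C a b \<tau> \<eta> Y" using opt Y by blast
  ultimately have "0 \<le> e * C i j + \<tau> * (ent (r + e) (a i) - ent r (a i) - e)
      + \<tau> * (ent (c + e) (b j) - ent c (b j) - e) + \<eta> * (2 * e * X i j + e^2)" by linarith
  also have "\<dots> \<le> e * C i j + \<tau> * (e * ln ((r + e) / a i)) + \<tau> * (e * ln ((c + e) / b j)) + \<eta> * (2 * e * X i j + e^2)"
    using dr dc tau by (simp add: add_mono)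
  also have "\<dots> = e * (C i j + \<eta> * (2 * X i j + e) + \<tau> * ln ((r + e) / a i) + \<tau> * ln ((c + e) / b j))"
    by (simp add: algebra_simps power2_eq_square)
  finally show ?thesis using e by (simp add: zero_le_mult_iff r_def c_def)
qed



lemma ln_min_eq: fixes x y :: real shows "x > 0 \<Longrightarrow> y > 0 \<Longrightarrow> min (ln x) (ln y) = ln (min x y)"
  using ln_le_cancel_iff[of x y] ln_le_cancel_iff[of y x] by (auto simp: min_def)

lemma ident_iv:
  fixes \<tau> :: real assumes "\<tau> > 0"
  shows "Cm + \<eta> * (2 * M) + \<eta> * e + \<tau> * (- (Cm + \<eta> * (2 * M) + \<tau> * LM - \<tau> * mn) / \<tau> - e / \<theta>) + \<tau> * (LM + e / M - lb)
   = \<tau> * mn - \<tau> * lb + e * (\<eta> + \<tau> / M - \<tau> / \<theta>)"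
  using assms by (simp add: field_simps)

lemma iv_abstract:
  fixes r c x Cij a b amin bmin M Cm \<tau> \<eta> :: real
  assumes r0: "0 \<le> r" and c0: "0 \<le> c" and cM: "c \<le> M" and x0: "0 \<le> x" and xM: "x \<le> M"
    and CC: "Cij \<le> Cm" and Cm0: "0 \<le> Cm" and am: "amin > 0" and bm: "bmin > 0"
    and aa: "amin \<le> a" and bb: "bmin \<le> b" and muM0: "min amin bmin \<le> M"
    and tau: "\<tau> > 0" and eta: "\<eta> > 0"
    and br: "\<forall>e>0. 0 \<le> Cij + \<eta> * (2 * x + e) + \<tau> * ln ((r + e) / a) + \<tau> * ln ((c + e) / b)"
  shows "r \<ge> min amin bmin * exp (- (Cm + \<eta> * (2 * M) + \<tau> * ln M - \<tau> * min (ln amin) (ln bmin)) / \<tau>)"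
proof (rule ccontr)
  define \<mu> where "\<mu> = min amin bmin"
  define D where "D = Cm + \<eta> * (2 * M) + \<tau> * ln M - \<tau> * min (ln amin) (ln bmin)"
  define \<theta> where "\<theta> = \<mu> * exp (- D / \<tau>)"
  assume "\<not> ?thesis"
  hence rt: "r < \<theta>" by (simp add: \<theta>_def \<mu>_def D_def)
  have mu0: "\<mu> > 0" using am bm by (simp add: \<mu>_def)
  have M0: "M > 0" using am bm muM0 by (smt (verit))
  have muM: "\<mu> \<le> M" using muM0 by (simp add: \<mu>_def)
  have lnmu: "min (ln amin) (ln bmin) = ln \<mu>" using am bm by (simp add: \<mu>_def ln_min_eq)
  have th0: "\<theta> > 0" using mu0 by (simp add: \<theta>_def)
  define e where "e = (\<theta> - r) / 2"
  have e0: "e > 0" using rt by (simp add: e_def)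
  define \<rho> where "\<rho> = r + e"
  have rho0: "\<rho> > 0" using r0 e0 by (simp add: \<rho>_def)
  have rhot: "\<rho> = \<theta> - e" by (simp add: \<rho>_def e_def field_simps)
  have lnth: "ln \<theta> = ln \<mu> - D / \<tau>" using mu0 by (simp add: \<theta>_def ln_mult)
  have "ln (\<rho> / \<theta>) \<le> \<rho> / \<theta> - 1" using rho0 th0 by (intro ln_le_minus_one) simp
  moreover have "\<rho> / \<theta> - 1 = - e / \<theta>" using th0 by (simp add: rhot field_simps)
  moreover have "ln (\<rho> / \<theta>) = ln \<rho> - ln \<theta>" using rho0 th0 by (simp add: ln_div)
  ultimately have l1: "ln \<rho> \<le> ln \<mu> - D / \<tau> - e / \<theta>" using lnth by linarith
  have lma: "ln \<mu> \<le> ln a" using mu0 aa by (simp add: \<mu>_def)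
  have "ln ((r + e) / a) = ln \<rho> - ln a" using rho0 am aa by (simp add: \<rho>_def ln_div)
  hence l2: "ln ((r + e) / a) \<le> - D / \<tau> - e / \<theta>" using l1 lma by linarith
  have "ln (c + e) \<le> ln (M + e)" using c0 e0 cM by simp
  moreover have "ln ((M + e) / M) \<le> (M + e) / M - 1" using M0 e0 by (intro ln_le_minus_one) simp
  moreover have "ln ((M + e) / M) = ln (M + e) - ln M" using M0 e0 by (simp add: ln_div)
  moreover have "(M + e) / M - 1 = e / M" using M0 by (simp add: field_simps)
  moreover have "ln ((c + e) / b) = ln (c + e) - ln b" using c0 e0 bb bm by (simp add: ln_div)
  moreover have "ln bmin \<le> ln b" using bm bb by simp
  ultimately have l3: "ln ((c + e) / b) \<le> ln M + e / M - ln bmin" by linarith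
  have key: "\<eta> + \<tau> / M < \<tau> / \<theta>"
  proof -
    define z where "z = 2 * \<eta> * M / \<tau>"
    have z0: "z > 0" using eta M0 tau by (simp add: z_def)
    have "D \<ge> \<eta> * (2 * M) + \<tau> * ln M - \<tau> * ln \<mu>" using Cm0 lnmu by (simp add: D_def)
    hence "- D / \<tau> \<le> - z - ln M + ln \<mu>" using tau by (simp add: z_def field_simps)
    hence "exp (- D / \<tau>) \<le> exp (- z - ln M + ln \<mu>)" by simp
    also have "exp (- z - ln M + ln \<mu>) = exp (- z) * \<mu> / M"
      using M0 mu0 by (simp add: exp_add exp_diff)
    finally have E: "exp (- D / \<tau>) \<le> exp (- z) * \<mu> / M" .
    have "\<mu> * exp (- D / \<tau>) \<le> \<mu> * (exp (- z) * \<mu> / M)" using mult_left_mono[OF E, of \<mu>] mu0 by simp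
    hence "\<theta> \<le> \<mu> * (exp (- z) * \<mu> / M)" by (simp only: \<theta>_def)
    also have "\<dots> = exp (- z) * (\<mu> * \<mu> / M)" by simp
    also have "\<dots> \<le> exp (- z) * M"
    proof -
      have "\<mu> * \<mu> \<le> M * M" using mu0 muM by (intro mult_mono) auto
      hence E2: "\<mu> * \<mu> / M \<le> M" using M0 by (simp add: divide_le_eq)
      show ?thesis using mult_left_mono[OF E2, of "exp (- z)"] by simp
    qed
    finally have tz: "\<theta> \<le> exp (- z) * M" .
    have "1 + z \<le> exp z" by simp
    hence "(1 + z) * exp (- z) \<le> 1" by (simp add: exp_minus field_simps)
    hence E3: "M * ((1 + z) * exp (- z)) \<le> M * 1" using M0 by (intro mult_left_mono) auto
    have "\<theta> * (1 + z) \<le> (exp (- z) * M) * (1 + z)" using tz z0 by (intro mult_right_mono) auto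
    also have "\<dots> = M * ((1 + z) * exp (- z))" by simp
    finally have "\<theta> * (1 + z) \<le> M" using E3 by simp
    hence E4: "\<tau> * (\<theta> * (1 + z)) \<le> \<tau> * M" using tau by (intro mult_left_mono) auto
    have "\<tau> * (1 + z) / M \<le> \<tau> / \<theta>" using th0 M0 tau E4 by (simp add: field_simps)
    moreover have "\<tau> * (1 + z) / M = \<tau> / M + 2 * \<eta>" using M0 tau by (simp add: z_def field_simps)
    ultimately show ?thesis using eta by linarith
  qed
  have b1: "Cij + \<eta> * (2 * x + e) \<le> Cm + \<eta> * (2 * M) + \<eta> * e"
  proof -
    have "\<eta> * x \<le> \<eta> * M" using eta xM by (intro mult_left_mono) auto
    thus ?thesis using CC by (simp add: distrib_left)
  qed
  have "0 \<le> Cij + \<eta> * (2 * x + e) + \<tau> * ln ((r + e) / a) + \<tau> * ln ((c + e) / b)" using br e0 by blast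
  also have "\<dots> \<le> Cm + \<eta> * (2 * M) + \<eta> * e + \<tau> * (- D / \<tau> - e / \<theta>) + \<tau> * (ln M + e / M - ln bmin)"
  proof -
    have "\<tau> * ln ((r + e) / a) \<le> \<tau> * (- D / \<tau> - e / \<theta>)" using l2 tau by (intro mult_left_mono) auto
    moreover have "\<tau> * ln ((c + e) / b) \<le> \<tau> * (ln M + e / M - ln bmin)" using l3 tau by (intro mult_left_mono) auto
    ultimately show ?thesis using b1 by linarith
  qed
  also have "\<dots> = \<tau> * min (ln amin) (ln bmin) - \<tau> * ln bmin + e * (\<eta> + \<tau> / M - \<tau> / \<theta>)"
    unfolding D_def by (rule ident_iv[OF tau])
  also have "\<dots> < 0"
  proof -
    have "\<tau> * min (ln amin) (ln bmin) \<le> \<tau> * ln bmin" using tau by simp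
    moreover have "e * (\<eta> + \<tau> / M - \<tau> / \<theta>) < 0" using e0 key by - (rule mult_pos_neg, auto)
    ultimately show ?thesis by linarith
  qed
  finally show False by simp
qed



lemma sum_row_delta:
  fixes g :: "'n::finite \<Rightarrow> 'n \<Rightarrow> real"
  shows "(\<Sum>k\<in>UNIV. \<Sum>l\<in>UNIV. (if k = i then g k l else 0)) = (\<Sum>l\<in>UNIV. g i l)"
proof -
  have "\<And>k. (\<Sum>l\<in>UNIV. (if k = i then g k l else 0)) = (if k = i then (\<Sum>l\<in>UNIV. g k l) else 0)"
    by auto
  thus ?thesis by (simp add: sum.delta)
qed

lemma dual_row_obj:
  fixes ts :: "'n::finite \<Rightarrow> 'n \<Rightarrow> real"
  shows "dual_obj a b \<tau> \<eta> (us(i := w)) vs (\<lambda>k l. if k = i then h l else ts k l)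
     = dual_obj a b \<tau> \<eta> us vs ts - (1 / (4 * \<eta>)) * ((\<Sum>l\<in>UNIV. (h l)^2) - (\<Sum>l\<in>UNIV. (ts i l)^2))
       - \<tau> * (exp (- w / \<tau>) * a i - exp (- us i / \<tau>) * a i)"
proof -
  have s1: "(\<Sum>k\<in>UNIV. \<Sum>l\<in>UNIV. ((if k = i then h l else ts k l))^2)
      = (\<Sum>k\<in>UNIV. \<Sum>l\<in>UNIV. (ts k l)^2) + ((\<Sum>l\<in>UNIV. (h l)^2) - (\<Sum>l\<in>UNIV. (ts i l)^2))"
  proof -
    have "(\<Sum>k\<in>UNIV. \<Sum>l\<in>UNIV. ((if k = i then h l else ts k l))^2)
       = (\<Sum>k\<in>UNIV. \<Sum>l\<in>UNIV. (ts k l)^2 + (if k = i then (h l)^2 - (ts k l)^2 else 0))"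
      by (intro sum.cong refl) auto
    also have "\<dots> = (\<Sum>k\<in>UNIV. \<Sum>l\<in>UNIV. (ts k l)^2) + (\<Sum>l\<in>UNIV. (h l)^2 - (ts i l)^2)"
      by (simp only: sum.distrib sum_row_delta)
    finally show ?thesis by (simp add: sum_subtractf)
  qed
  have s2: "(\<Sum>k\<in>UNIV. exp (- (us(i := w)) k / \<tau>) * a k)
      = (\<Sum>k\<in>UNIV. exp (- us k / \<tau>) * a k) + (exp (- w / \<tau>) * a i - exp (- us i / \<tau>) * a i)"
  proof -
    have "(\<Sum>k\<in>UNIV. exp (- (us(i := w)) k / \<tau>) * a k)
       = (\<Sum>k\<in>UNIV. if k = i then exp (- w / \<tau>) * a k else exp (- us k / \<tau>) * a k)"
      by (intro sum.cong refl) auto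
    thus ?thesis by (simp add: sum_if_eq)
  qed
  show ?thesis unfolding dual_obj_def s1 s2 by (simp add: algebra_simps)
qed

lemma lim_le:
  fixes f g :: "real \<Rightarrow> real"
  assumes "\<And>d. d > 0 \<Longrightarrow> f d \<le> g d" "(f \<longlongrightarrow> F) (at_right 0)" "(g \<longlongrightarrow> G) (at_right 0)"
  shows "F \<le> G"
proof (rule tendsto_le[OF _ assms(3) assms(2)])
  show "at_right (0::real) \<noteq> bot" by simp
  show "\<forall>\<^sub>F x in at_right 0. f x \<le> g x"
    using eventually_at_right_less[of "0::real"] by (rule eventually_mono) (use assms(1) in auto)
qed

lemma row_stat:
  fixes C ts :: "'n::finite \<Rightarrow> 'n \<Rightarrow> real" and a b us vs :: "'n \<Rightarrow> real"
  assumes apos: "\<forall>i. a i > 0" and tau: "\<tau> > 0" and eta: "\<eta> > 0"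
    and dual_opt: "dual_feasible C us vs ts \<and>
       (\<forall>u v t. dual_feasible C u v t \<longrightarrow> dual_obj a b \<tau> \<eta> u v t \<le> dual_obj a b \<tau> \<eta> us vs ts)"
  shows "a i * exp (- us i / \<tau>) = rowsum ts i / (2 * \<eta>)"
proof -
  define S where "S = rowsum ts i"
  define E where "E = exp (- us i / \<tau>)"
  define N where "N = real (card (UNIV :: 'n set))"
  have feas: "\<forall>k l. ts k l \<ge> 0 \<and> ts k l \<ge> us k + vs l - C k l" using dual_opt by (simp add: dual_feasible_def)
  have ai: "a i > 0" using apos by simp
  have E0: "E > 0" by (simp add: E_def)
  have A: "a i * E \<le> S / (2 * \<eta>)"
  proof -
    have main: "a i * E * exp (- d / \<tau>) \<le> (2 * S + N * d) / (4 * \<eta>)" if d: "d > 0" for d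
    proof -
      define h where "h = (\<lambda>l. ts i l + d)"
      have F: "dual_feasible C (us(i := us i + d)) vs (\<lambda>k l. if k = i then h l else ts k l)"
        using feas d by (auto simp: dual_feasible_def h_def) (smt (verit))+
      have le: "dual_obj a b \<tau> \<eta> (us(i := us i + d)) vs (\<lambda>k l. if k = i then h l else ts k l) \<le> dual_obj a b \<tau> \<eta> us vs ts"
        using dual_opt F by blast
      have hs: "(\<Sum>l\<in>UNIV. (h l)^2) - (\<Sum>l\<in>UNIV. (ts i l)^2) = 2 * d * S + N * d^2"
      proof -
        have "(\<Sum>l\<in>UNIV. (h l)^2) = (\<Sum>l\<in>UNIV. (ts i l)^2 + 2 * d * ts i l + d^2)"
          by (intro sum.cong refl) (simp add: h_def power2_eq_square algebra_simps)
        also have "\<dots> = (\<Sum>l\<in>UNIV. (ts i l)^2) + 2 * d * S + N * d^2"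
          by (simp add: sum.distrib S_def rowsum_def sum_distrib_left N_def)
        finally show ?thesis by simp
      qed
      have ex: "exp (- (us i + d) / \<tau>) = E * exp (- d / \<tau>)"
        by (simp add: E_def exp_add[symmetric] diff_divide_distrib add_divide_distrib)
      from le have "- (1 / (4 * \<eta>)) * (2 * d * S + N * d^2) - \<tau> * (E * exp (- d / \<tau>) * a i - E * a i) \<le> 0"
        unfolding dual_row_obj hs ex E_def by simp
      moreover have "\<tau> * (a i * E) * (1 - exp (- d / \<tau>)) = - (\<tau> * (E * exp (- d / \<tau>) * a i - E * a i))"
        by (simp add: algebra_simps)
      moreover have "(1 / (4 * \<eta>)) * (2 * d * S + N * d^2) = (2 * d * S + N * d^2) / (4 * \<eta>)" by simp
      ultimately have i1: "\<tau> * (a i * E) * (1 - exp (- d / \<tau>)) \<le> (2 * d * S + N * d^2) / (4 * \<eta>)"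
        by linarith
      have "1 + d / \<tau> \<le> exp (d / \<tau>)" by simp
      hence "(1 + d / \<tau>) * exp (- d / \<tau>) \<le> 1" by (simp add: exp_minus field_simps)
      hence i2: "d / \<tau> * exp (- d / \<tau>) \<le> 1 - exp (- d / \<tau>)" by (simp add: algebra_simps)
      have "\<tau> * (a i * E) * (d / \<tau> * exp (- d / \<tau>)) \<le> \<tau> * (a i * E) * (1 - exp (- d / \<tau>))"
        using i2 tau ai E0 by (intro mult_left_mono) auto
      also have "\<tau> * (a i * E) * (d / \<tau> * exp (- d / \<tau>)) = d * (a i * E * exp (- d / \<tau>))"
        using tau by simp
      finally have "d * (a i * E * exp (- d / \<tau>)) \<le> d * ((2 * S + N * d) / (4 * \<eta>))"
        using i1 by (simp add: power2_eq_square field_simps)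
      thus ?thesis using d by (simp only: mult_le_cancel_left_pos)
    qed
    have l1: "((\<lambda>d. a i * E * exp (- d / \<tau>)) \<longlongrightarrow> a i * E * exp (- 0 / \<tau>)) (at_right 0)"
      by (intro tendsto_intros) (use tau eta in auto)
    have l2: "((\<lambda>d. (2 * S + N * d) / (4 * \<eta>)) \<longlongrightarrow> (2 * S + N * 0) / (4 * \<eta>)) (at_right 0)"
      by (intro tendsto_intros) (use tau eta in auto)
    have "a i * E * exp (- 0 / \<tau>) \<le> (2 * S + N * 0) / (4 * \<eta>)" by (rule lim_le[OF main l1 l2])
    thus ?thesis by simp
  qed
  have B: "S / (2 * \<eta>) \<le> a i * E"
  proof -
    have main: "(2 * S - N * d) / (4 * \<eta>) \<le> a i * E * exp (d / \<tau>)" if d: "d > 0" for d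
    proof -
      define h where "h = (\<lambda>l. max 0 (ts i l - d))"
      have F: "dual_feasible C (us(i := us i - d)) vs (\<lambda>k l. if k = i then h l else ts k l)"
        using feas d by (auto simp: dual_feasible_def h_def) (smt (verit))
      have le: "dual_obj a b \<tau> \<eta> (us(i := us i - d)) vs (\<lambda>k l. if k = i then h l else ts k l) \<le> dual_obj a b \<tau> \<eta> us vs ts"
        using dual_opt F by blast
      have hs: "(\<Sum>l\<in>UNIV. (h l)^2) - (\<Sum>l\<in>UNIV. (ts i l)^2) \<le> N * d^2 - 2 * d * S"
      proof -
        have "(\<Sum>l\<in>UNIV. (h l)^2) \<le> (\<Sum>l\<in>UNIV. (ts i l)^2 - 2 * d * ts i l + d^2)"
        proof (rule sum_mono)
          fix l
          show "(h l)^2 \<le> (ts i l)^2 - 2 * d * ts i l + d^2"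
          proof (cases "ts i l - d \<ge> 0")
            case True thus ?thesis by (simp add: h_def power2_eq_square algebra_simps)
          next
            case False
            have "0 \<le> (ts i l - d)^2" by simp
            thus ?thesis using False by (simp add: h_def power2_eq_square algebra_simps)
          qed
        qed
        also have "\<dots> = (\<Sum>l\<in>UNIV. (ts i l)^2) - 2 * d * S + N * d^2"
          by (simp add: sum.distrib sum_subtractf S_def rowsum_def sum_distrib_left N_def)
        finally show ?thesis by simp
      qed
      have ex: "exp (- (us i - d) / \<tau>) = E * exp (d / \<tau>)"
        by (simp add: E_def exp_add[symmetric] diff_divide_distrib add_divide_distrib)
      from le have "- (1 / (4 * \<eta>)) * ((\<Sum>l\<in>UNIV. (h l)^2) - (\<Sum>l\<in>UNIV. (ts i l)^2))
           - \<tau> * (E * exp (d / \<tau>) * a i - E * a i) \<le> 0"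
        unfolding dual_row_obj ex E_def by simp
      moreover have "- (1 / (4 * \<eta>)) * (N * d^2 - 2 * d * S) \<le> - (1 / (4 * \<eta>)) * ((\<Sum>l\<in>UNIV. (h l)^2) - (\<Sum>l\<in>UNIV. (ts i l)^2))"
        using hs eta by (intro mult_left_mono_neg) auto
      moreover have "(2 * d * S - N * d^2) / (4 * \<eta>) = - (1 / (4 * \<eta>)) * (N * d^2 - 2 * d * S)"
        by (simp add: diff_divide_distrib)
      moreover have "\<tau> * (a i * E) * (exp (d / \<tau>) - 1) = \<tau> * (E * exp (d / \<tau>) * a i - E * a i)"
        by (simp add: algebra_simps)
      ultimately have i1: "(2 * d * S - N * d^2) / (4 * \<eta>) \<le> \<tau> * (a i * E) * (exp (d / \<tau>) - 1)"
        by linarith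
      have "1 - d / \<tau> \<le> exp (- d / \<tau>)" using exp_ge_add_one_self[of "- d / \<tau>"] by simp
      hence "(1 - d / \<tau>) * exp (d / \<tau>) \<le> 1" by (simp add: exp_minus field_simps)
      hence i2: "exp (d / \<tau>) - 1 \<le> d / \<tau> * exp (d / \<tau>)" by (simp add: algebra_simps)
      have "\<tau> * (a i * E) * (exp (d / \<tau>) - 1) \<le> \<tau> * (a i * E) * (d / \<tau> * exp (d / \<tau>))"
        using i2 tau ai E0 by (intro mult_left_mono) auto
      also have "\<tau> * (a i * E) * (d / \<tau> * exp (d / \<tau>)) = d * (a i * E * exp (d / \<tau>))"
        using tau by simp
      finally have "d * ((2 * S - N * d) / (4 * \<eta>)) \<le> d * (a i * E * exp (d / \<tau>))"
        using i1 by (simp add: power2_eq_square field_simps)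
      thus ?thesis using d by (simp only: mult_le_cancel_left_pos)
    qed
    have l1: "((\<lambda>d. a i * E * exp (d / \<tau>)) \<longlongrightarrow> a i * E * exp (0 / \<tau>)) (at_right 0)"
      by (intro tendsto_intros) (use tau eta in auto)
    have l2: "((\<lambda>d. (2 * S - N * d) / (4 * \<eta>)) \<longlongrightarrow> (2 * S - N * 0) / (4 * \<eta>)) (at_right 0)"
      by (intro tendsto_intros) (use tau eta in auto)
    have "(2 * S - N * 0) / (4 * \<eta>) \<le> a i * E * exp (0 / \<tau>)" by (rule lim_le[OF main l2 l1])
    thus ?thesis by simp
  qed
  show ?thesis using A B by (simp add: S_def E_def)
qed



lemma dual_CS:
  fixes C ts :: "'n::finite \<Rightarrow> 'n \<Rightarrow> real" and a b us vs :: "'n \<Rightarrow> real"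
  assumes eta: "\<eta> > 0"
    and dual_opt: "dual_feasible C us vs ts \<and>
       (\<forall>u v t. dual_feasible C u v t \<longrightarrow> dual_obj a b \<tau> \<eta> u v t \<le> dual_obj a b \<tau> \<eta> us vs ts)"
  shows "ts i j > 0 \<longrightarrow> ts i j \<le> us i + vs j - C i j"
proof (rule impI, rule ccontr)
  assume t0: "ts i j > 0" and "\<not> ts i j \<le> us i + vs j - C i j"
  hence lt: "max 0 (us i + vs j - C i j) < ts i j" by simp
  define w where "w = max 0 (us i + vs j - C i j)"
  have w0: "w \<ge> 0" by (simp add: w_def)
  define t' where "t' = (\<lambda>k l. if k = i \<and> l = j then w else ts k l)"
  have feas: "\<forall>k l. ts k l \<ge> 0 \<and> ts k l \<ge> us k + vs l - C k l" using dual_opt by (simp add: dual_feasible_def)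
  have F: "dual_feasible C us vs t'" using feas by (auto simp: dual_feasible_def t'_def w_def)
  have sq: "(\<Sum>k\<in>UNIV. \<Sum>l\<in>UNIV. (t' k l)^2) = (\<Sum>k\<in>UNIV. \<Sum>l\<in>UNIV. (ts k l)^2) + (w^2 - (ts i j)^2)"
  proof -
    have "(\<Sum>k\<in>UNIV. \<Sum>l\<in>UNIV. (t' k l)^2) = (\<Sum>k\<in>UNIV. \<Sum>l\<in>UNIV. (ts k l)^2 + (if k = i \<and> l = j then w^2 - (ts k l)^2 else 0))"
      by (intro sum.cong refl) (auto simp: t'_def)
    also have "\<dots> = (\<Sum>k\<in>UNIV. \<Sum>l\<in>UNIV. (ts k l)^2) + (w^2 - (ts i j)^2)"
      by (simp only: sum.distrib dsum_delta)
    finally show ?thesis .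
  qed
  have "w^2 < (ts i j)^2" using lt w0 by (simp add: w_def power_strict_mono)
  hence "dual_obj a b \<tau> \<eta> us vs ts < dual_obj a b \<tau> \<eta> us vs t'"
    unfolding dual_obj_def sq using eta by (simp add: field_simps)
  moreover have "dual_obj a b \<tau> \<eta> us vs t' \<le> dual_obj a b \<tau> \<eta> us vs ts" using dual_opt F by blast
  ultimately show False by simp
qed

lemma dual_transpose:
  fixes C ts :: "'n::finite \<Rightarrow> 'n \<Rightarrow> real" and a b us vs :: "'n \<Rightarrow> real"
  assumes dual_opt: "dual_feasible C us vs ts \<and>
       (\<forall>u v t. dual_feasible C u v t \<longrightarrow> dual_obj a b \<tau> \<eta> u v t \<le> dual_obj a b \<tau> \<eta> us vs ts)"
  shows "dual_feasible (\<lambda>i j. C j i) vs us (\<lambda>i j. ts j i) \<and>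
       (\<forall>u v t. dual_feasible (\<lambda>i j. C j i) u v t \<longrightarrow> dual_obj b a \<tau> \<eta> u v t \<le> dual_obj b a \<tau> \<eta> vs us (\<lambda>i j. ts j i))"
proof -
  have fe: "dual_feasible (\<lambda>i j. C j i) u v t \<longleftrightarrow> dual_feasible C v u (\<lambda>i j. t j i)" for u v t
    unfolding dual_feasible_def by (auto simp: add.commute)
  have ob: "dual_obj b a \<tau> \<eta> u v t = dual_obj a b \<tau> \<eta> v u (\<lambda>i j. t j i)" for u v t
  proof -
    have "(\<Sum>i\<in>UNIV. \<Sum>j\<in>UNIV. (t j i)^2) = (\<Sum>i\<in>UNIV. \<Sum>j\<in>UNIV. (t i j)^2)"
      by (rule sum.swap)
    thus ?thesis unfolding dual_obj_def by simp
  qed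
  show ?thesis
  proof
    show "dual_feasible (\<lambda>i j. C j i) vs us (\<lambda>i j. ts j i)" using dual_opt fe by simp
    show "\<forall>u v t. dual_feasible (\<lambda>i j. C j i) u v t \<longrightarrow> dual_obj b a \<tau> \<eta> u v t \<le> dual_obj b a \<tau> \<eta> vs us (\<lambda>i j. ts j i)"
    proof (intro allI impI)
      fix u v t assume "dual_feasible (\<lambda>i j. C j i) u v t"
      hence "dual_feasible C v u (\<lambda>i j. t j i)" using fe by simp
      hence "dual_obj a b \<tau> \<eta> v u (\<lambda>i j. t j i) \<le> dual_obj a b \<tau> \<eta> us vs ts" using dual_opt by blast
      moreover have "(\<lambda>i j. (\<lambda>i j. ts j i) j i) = ts" by simp
      ultimately show "dual_obj b a \<tau> \<eta> u v t \<le> dual_obj b a \<tau> \<eta> vs us (\<lambda>i j. ts j i)"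
        using ob[of u v t] ob[of vs us "\<lambda>i j. ts j i"] by simp
    qed
  qed
qed

lemma dual_mass:
  fixes C ts :: "'n::finite \<Rightarrow> 'n \<Rightarrow> real" and a b us vs :: "'n \<Rightarrow> real"
  assumes apos: "\<forall>i. a i > 0" and bpos: "\<forall>i. b i > 0" and tau: "\<tau> > 0" and eta: "\<eta> > 0"
    and C: "\<forall>i j. C i j \<ge> 0" and t0: "\<forall>i j. ts i j \<ge> 0"
    and CS: "\<forall>i j. ts i j > 0 \<longrightarrow> ts i j \<le> us i + vs j - C i j"
    and rs: "\<forall>i. a i * exp (- us i / \<tau>) = rowsum ts i / (2 * \<eta>)"
    and cs: "\<forall>j. b j * exp (- vs j / \<tau>) = colsum ts j / (2 * \<eta>)"
  shows "(\<Sum>i\<in>UNIV. \<Sum>j\<in>UNIV. ts i j) / (2 * \<eta>) \<le> ((\<Sum>i\<in>UNIV. a i) + (\<Sum>i\<in>UNIV. b i)) / 2"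
proof -
  define m where "m = (\<Sum>i\<in>UNIV. \<Sum>j\<in>UNIV. ts i j) / (2 * \<eta>)"
  define \<alpha> where "\<alpha> = (\<Sum>i\<in>UNIV. a i)"
  define \<beta> where "\<beta> = (\<Sum>i\<in>UNIV. b i)"
  define r where "r = (\<lambda>i. a i * exp (- us i / \<tau>))"
  define c where "c = (\<lambda>j. b j * exp (- vs j / \<tau>))"
  have al: "\<alpha> > 0" unfolding \<alpha>_def using apos by (simp add: sum_pos)
  have be: "\<beta> > 0" unfolding \<beta>_def using bpos by (simp add: sum_pos)
  have rpos: "\<forall>i. r i > 0" using apos by (simp add: r_def)
  have cpos: "\<forall>i. c i > 0" using bpos by (simp add: c_def)
  have sr: "(\<Sum>i\<in>UNIV. r i) = m"
    using rs by (simp add: r_def m_def rowsum_def sum_divide_distrib)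
  have sc: "(\<Sum>i\<in>UNIV. c i) = m"
  proof -
    have "(\<Sum>i\<in>UNIV. c i) = (\<Sum>j\<in>UNIV. \<Sum>i\<in>UNIV. ts i j) / (2 * \<eta>)"
      using cs by (simp add: c_def colsum_def sum_divide_distrib)
    also have "(\<Sum>j\<in>UNIV. \<Sum>i\<in>UNIV. ts i j) = (\<Sum>i\<in>UNIV. \<Sum>j\<in>UNIV. ts i j)" by (rule sum.swap)
    finally show ?thesis by (simp add: m_def)
  qed
  have m0: "m > 0" using rpos sr[symmetric] by (simp add: sum_pos)
  have er: "ent (r i) (a i) = - r i * us i / \<tau>" for i
  proof -
    have "r i / a i = exp (- us i / \<tau>)" using apos[rule_format, of i] by (simp add: r_def)
    thus ?thesis using rpos by (simp add: ent_def)
  qed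
  have ec: "ent (c i) (b i) = - c i * vs i / \<tau>" for i
  proof -
    have "c i / b i = exp (- vs i / \<tau>)" using bpos[rule_format, of i] by (simp add: c_def)
    thus ?thesis using cpos by (simp add: ent_def)
  qed
  have key: "(\<Sum>i\<in>UNIV. r i * us i) + (\<Sum>j\<in>UNIV. c j * vs j) \<ge> 0"
  proof -
    have "(\<Sum>i\<in>UNIV. r i * us i) = (\<Sum>i\<in>UNIV. \<Sum>j\<in>UNIV. ts i j * us i) / (2 * \<eta>)"
      using rs by (simp add: r_def rowsum_def sum_divide_distrib sum_distrib_right)
    moreover have "(\<Sum>j\<in>UNIV. c j * vs j) = (\<Sum>i\<in>UNIV. \<Sum>j\<in>UNIV. ts i j * vs j) / (2 * \<eta>)"
    proof -
      have "(\<Sum>j\<in>UNIV. c j * vs j) = (\<Sum>j\<in>UNIV. \<Sum>i\<in>UNIV. ts i j * vs j) / (2 * \<eta>)"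
        using cs by (simp add: c_def colsum_def sum_divide_distrib sum_distrib_right)
      also have "(\<Sum>j\<in>UNIV. \<Sum>i\<in>UNIV. ts i j * vs j) = (\<Sum>i\<in>UNIV. \<Sum>j\<in>UNIV. ts i j * vs j)"
        by (rule sum.swap)
      finally show ?thesis .
    qed
    moreover have "(\<Sum>i\<in>UNIV. \<Sum>j\<in>UNIV. ts i j * us i) + (\<Sum>i\<in>UNIV. \<Sum>j\<in>UNIV. ts i j * vs j)
        = (\<Sum>i\<in>UNIV. \<Sum>j\<in>UNIV. ts i j * (us i + vs j))"
      by (simp add: sum.distrib[symmetric] distrib_left)
    moreover have "(\<Sum>i\<in>UNIV. \<Sum>j\<in>UNIV. ts i j * (us i + vs j)) \<ge> 0"
    proof (intro sum_nonneg)
      fix i j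
      show "ts i j * (us i + vs j) \<ge> 0"
      proof (cases "ts i j > 0")
        case True
        hence "us i + vs j \<ge> 0" using CS C[rule_format, of i j] by force
        thus ?thesis using t0 by simp
      next
        case False thus ?thesis using t0[rule_format, of i j] by simp
      qed
    qed
    ultimately show ?thesis using eta by (simp add: add_divide_distrib[symmetric])
  qed
  have Er: "(\<Sum>i\<in>UNIV. ent (r i) (a i)) \<ge> m * ln (m / \<alpha>)"
    unfolding \<alpha>_def by (rule logsum) (use rpos apos sr m0 in \<open>auto intro: less_imp_le\<close>)
  have Ec: "(\<Sum>i\<in>UNIV. ent (c i) (b i)) \<ge> m * ln (m / \<beta>)"
    unfolding \<beta>_def by (rule logsum) (use cpos bpos sc m0 in \<open>auto intro: less_imp_le\<close>)
  have "(\<Sum>i\<in>UNIV. ent (r i) (a i)) + (\<Sum>i\<in>UNIV. ent (c i) (b i))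
      = - ((\<Sum>i\<in>UNIV. r i * us i) + (\<Sum>j\<in>UNIV. c j * vs j)) / \<tau>"
    by (simp add: er ec sum_divide_distrib[symmetric] sum_negf add_divide_distrib diff_divide_distrib)
  also have "\<dots> \<le> 0" using key tau by (intro divide_nonpos_pos) auto
  finally have "m * ln (m / \<alpha>) + m * ln (m / \<beta>) \<le> 0" using Er Ec by linarith
  hence "m * (ln (m / \<alpha>) + ln (m / \<beta>)) \<le> 0" by (simp add: distrib_left)
  hence "ln (m / \<alpha>) + ln (m / \<beta>) \<le> 0" using m0 by (simp add: mult_le_0_iff)
  moreover have "ln (m / \<alpha>) + ln (m / \<beta>) = ln (m * m / (\<alpha> * \<beta>))"
    using m0 al be by (simp add: ln_div ln_mult)
  ultimately have "ln (m * m / (\<alpha> * \<beta>)) \<le> 0" by simp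
  hence "m * m / (\<alpha> * \<beta>) \<le> 1" using m0 al be by simp
  hence mm: "m * m \<le> \<alpha> * \<beta>" using al be by (simp add: divide_le_eq)
  have "\<alpha> * \<beta> \<le> ((\<alpha> + \<beta>) / 2) * ((\<alpha> + \<beta>) / 2)"
  proof -
    have "0 \<le> (\<alpha> - \<beta>) * (\<alpha> - \<beta>)" by simp
    thus ?thesis by (simp add: algebra_simps)
  qed
  hence "m * m \<le> ((\<alpha> + \<beta>) / 2) * ((\<alpha> + \<beta>) / 2)" using mm by linarith
  hence "m \<le> (\<alpha> + \<beta>) / 2" using al be m0 by (metis mult_mono not_le less_le_trans mult_strict_mono' order_less_irrefl add_pos_pos half_gt_zero less_imp_le)
  thus ?thesis by (simp add: m_def \<alpha>_def \<beta>_def)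
qed



lemma ii_lemma:
  fixes a M \<tau> u :: real
  assumes "a > 0" "M > 0" "\<tau> > 0" "a * exp (- u / \<tau>) \<le> M"
  shows "\<tau> * ln (a / M) \<le> u"
proof -
  have "ln (a * exp (- u / \<tau>)) \<le> ln M" using assms by simp
  hence "ln a - u / \<tau> \<le> ln M" using assms by (simp add: ln_mult)
  hence "ln (a / M) \<le> u / \<tau>" using assms by (simp add: ln_div)
  hence "\<tau> * ln (a / M) \<le> \<tau> * (u / \<tau>)" using assms by (intro mult_left_mono) auto
  thus ?thesis using assms by simp
qed

lemma lower_lemma:
  fixes a amin M \<tau> u Cm \<eta> lb :: real
  assumes "amin > 0" "amin \<le> a" "M > 0" "\<tau> > 0" "Cm \<ge> 0" "\<eta> \<ge> 0" "\<tau> * ln (a / M) \<le> u"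
  shows "- u \<le> Cm + \<eta> * (2 * M) + \<tau> * ln M - \<tau> * min (ln amin) lb"
proof -
  have "ln (a / M) = ln a - ln M" using assms by (simp add: ln_div)
  moreover have "ln amin \<le> ln a" using assms by simp
  ultimately have f1: "\<tau> * (ln amin - ln M) \<le> \<tau> * ln (a / M)" using assms by (intro mult_left_mono) auto
  have f2: "\<tau> * min (ln amin) lb \<le> \<tau> * ln amin" using assms by (intro mult_left_mono) auto
  have f3: "\<eta> * (2 * M) \<ge> 0" using assms by simp
  have f4: "\<tau> * (ln amin - ln M) = \<tau> * ln amin - \<tau> * ln M" by (simp add: algebra_simps)
  show ?thesis using f1 f2 f3 f4 assms(5,7) by linarith
qed

lemma upper_lemma:
  fixes b bmin M \<tau> u v t Cij Cm \<eta> la :: real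
  assumes "bmin > 0" "bmin \<le> b" "M > 0" "\<tau> > 0" "\<eta> > 0" "\<tau> * ln (b / M) \<le> v"
    "t \<ge> u + v - Cij" "Cij \<le> Cm" "t \<le> 2 * \<eta> * M"
  shows "u \<le> Cm + \<eta> * (2 * M) + \<tau> * ln M - \<tau> * min la (ln bmin)"
proof -
  have "ln (b / M) = ln b - ln M" using assms by (simp add: ln_div)
  moreover have "ln bmin \<le> ln b" using assms by simp
  ultimately have f1: "\<tau> * (ln bmin - ln M) \<le> \<tau> * ln (b / M)" using assms by (intro mult_left_mono) auto
  have f2: "\<tau> * min la (ln bmin) \<le> \<tau> * ln bmin" using assms by (intro mult_left_mono) auto
  have f4: "\<tau> * (ln bmin - ln M) = \<tau> * ln bmin - \<tau> * ln M" by (simp add: algebra_simps)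
  have f5: "2 * \<eta> * M = \<eta> * (2 * M)" by simp
  show ?thesis using f1 f2 f4 f5 assms(6-9) by linarith
qed

lemma maxvec_le: "(\<forall>i. \<bar>u i\<bar> \<le> D) \<Longrightarrow> maxnorm_vec (u :: 'n::finite \<Rightarrow> real) \<le> D"
proof -
  assume h: "\<forall>i. \<bar>u i\<bar> \<le> D"
  have e: "{\<bar>u i\<bar> | i. True} = range (\<lambda>i. \<bar>u i\<bar>)" by auto
  show ?thesis unfolding maxnorm_vec_def e using h by (subst Max_le_iff) auto
qed

lemma maxmat_ge: "C i j \<le> maxnorm_mat (C :: 'n::finite \<Rightarrow> 'n \<Rightarrow> real)"
proof -
  have e: "{\<bar>C i j\<bar> | i j. True} = (\<lambda>(i, j). \<bar>C i j\<bar>) ` UNIV" by auto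
  have "\<bar>C i j\<bar> \<le> maxnorm_mat C" unfolding maxnorm_mat_def e by (rule Max_ge) auto
  thus ?thesis by simp
qed

lemma min_range: "\<forall>i. (a::'n::finite \<Rightarrow> real) i > 0 \<Longrightarrow> Min (range a) > 0 \<and> (\<forall>i. Min (range a) \<le> a i) \<and> Min (range a) \<le> (\<Sum>i\<in>UNIV. a i)"
proof -
  assume h: "\<forall>i. a i > 0"
  have "Min (range a) \<in> range a" by (rule Min_in) auto
  hence p: "Min (range a) > 0" using h by auto
  have le: "\<forall>i. Min (range a) \<le> a i" by (auto intro: Min_le)
  obtain i0 :: 'n where True by simp
  have "a i0 \<le> (\<Sum>i\<in>UNIV. a i)" by (rule member_le_sum) (use h in \<open>auto intro: less_imp_le\<close>)
  thus ?thesis using p le by (meson order_trans)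
qed



theorem mainTheorem7:
  fixes C :: "'n::finite \<Rightarrow> 'n \<Rightarrow> real"
    and a b :: "'n \<Rightarrow> real"
    and \<tau> \<eta> :: real
    and X\<eta> Xf :: "'n \<Rightarrow> 'n \<Rightarrow> real"
    and us vs :: "'n \<Rightarrow> real" and ts :: "'n \<Rightarrow> 'n \<Rightarrow> real"
  assumes C_nonneg: "\<forall>i j. C i j \<ge> 0"
    and a_pos: "\<forall>i. a i > 0" and b_pos: "\<forall>i. b i > 0"
    and tau_pos: "\<tau> > 0" and eta_pos: "\<eta> > 0"
    and Xeta_min: "nonneg_mat X\<eta> \<and> (\<forall>Y. nonneg_mat Y \<longrightarrow> uot_g C a b \<tau> \<eta> X\<eta> \<le> uot_g C a b \<tau> \<eta> Y)"
    and Xf_min: "nonneg_mat Xf \<and> (\<forall>Y. nonneg_mat Y \<longrightarrow> uot_f C a b \<tau> Xf \<le> uot_f C a b \<tau> Y)"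
    and dual_opt: "dual_feasible C us vs ts \<and>
       (\<forall>u v t. dual_feasible C u v t \<longrightarrow> dual_obj a b \<tau> \<eta> u v t \<le> dual_obj a b \<tau> \<eta> us vs ts)"
  defines "\<alpha> \<equiv> (\<Sum>i\<in>UNIV. a i)" and "\<beta> \<equiv> (\<Sum>i\<in>UNIV. b i)"
    and "amin \<equiv> Min (range a)" and "bmin \<equiv> Min (range b)"
  defines "D \<equiv> maxnorm_mat C + \<eta> * (\<alpha> + \<beta>) + \<tau> * ln ((\<alpha> + \<beta>) / 2)
                 - \<tau> * min (ln amin) (ln bmin)"
  shows "norm1_mat X\<eta> \<le> (\<alpha> + \<beta>) / 2 \<and> norm1_mat Xf \<le> (\<alpha> + \<beta>) / 2 \<and>
     (\<forall>i. us i \<ge> \<tau> * ln (2 * a i / (\<alpha> + \<beta>))) \<and>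
     (\<forall>j. vs j \<ge> \<tau> * ln (2 * b j / (\<alpha> + \<beta>))) \<and>
     maxnorm_vec us \<le> D \<and> maxnorm_vec vs \<le> D \<and>
     (\<forall>i j. min (rowsum X\<eta> i) (colsum X\<eta> j) \<ge> min amin bmin * exp (- D / \<tau>))"
proof -
  define M where "M = (\<alpha> + \<beta>) / 2"
  define Cm where "Cm = maxnorm_mat C"
  have Xe: "nonneg_mat X\<eta>" and Xeo: "\<forall>Y. nonneg_mat Y \<longrightarrow> uot_g C a b \<tau> \<eta> X\<eta> \<le> uot_g C a b \<tau> \<eta> Y"
    using Xeta_min by auto
  have Xff: "nonneg_mat Xf" and Xfo: "\<forall>Y. nonneg_mat Y \<longrightarrow> uot_g C a b \<tau> 0 Xf \<le> uot_g C a b \<tau> 0 Y"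
    using Xf_min by (auto simp: uot_g_def)
  have am: "amin > 0" "\<forall>i. amin \<le> a i" "amin \<le> \<alpha>"
    using min_range[OF a_pos] by (auto simp: amin_def \<alpha>_def)
  have bm: "bmin > 0" "\<forall>i. bmin \<le> b i" "bmin \<le> \<beta>"
    using min_range[OF b_pos] by (auto simp: bmin_def \<beta>_def)
  have al: "\<alpha> > 0" unfolding \<alpha>_def using a_pos by (simp add: sum_pos)
  have be: "\<beta> > 0" unfolding \<beta>_def using b_pos by (simp add: sum_pos)
  have M0: "M > 0" using al be by (simp add: M_def)
  have muM: "min amin bmin \<le> M" using am bm by (simp add: M_def)
  obtain i0 :: 'n where True by simp
  have "0 \<le> C i0 i0" using C_nonneg by blast
  hence Cm0: "Cm \<ge> 0" using maxmat_ge[of C i0 i0] unfolding Cm_def by linarith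
  have CmC: "\<And>i j. C i j \<le> Cm" by (simp add: Cm_def maxmat_ge)
  have Deq: "D = Cm + \<eta> * (2 * M) + \<tau> * ln M - \<tau> * min (ln amin) (ln bmin)"
    by (simp add: D_def M_def Cm_def)
  have n1: "norm1_mat X\<eta> \<le> M"
    using primal_mass[OF C_nonneg a_pos b_pos tau_pos _ Xe Xeo] eta_pos by (simp add: M_def \<alpha>_def \<beta>_def)
  have n2: "norm1_mat Xf \<le> M"
    using primal_mass[OF C_nonneg a_pos b_pos tau_pos _ Xff Xfo] by (simp add: M_def \<alpha>_def \<beta>_def)
  have rs: "\<forall>i. a i * exp (- us i / \<tau>) = rowsum ts i / (2 * \<eta>)"
    using row_stat[OF a_pos tau_pos eta_pos dual_opt] by blast
  have cs: "\<forall>j. b j * exp (- vs j / \<tau>) = colsum ts j / (2 * \<eta>)"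
  proof
    fix j
    have "b j * exp (- vs j / \<tau>) = rowsum (\<lambda>i j. ts j i) j / (2 * \<eta>)"
      using row_stat[OF b_pos tau_pos eta_pos dual_transpose[OF dual_opt]] by blast
    thus "b j * exp (- vs j / \<tau>) = colsum ts j / (2 * \<eta>)" by (simp add: rowsum_def colsum_def)
  qed
  have CS: "\<forall>i j. ts i j > 0 \<longrightarrow> ts i j \<le> us i + vs j - C i j"
    using dual_CS[OF eta_pos dual_opt] by blast
  have feas: "\<forall>i j. ts i j \<ge> 0 \<and> ts i j \<ge> us i + vs j - C i j"
    using dual_opt by (simp add: dual_feasible_def)
  have t0: "\<forall>i j. ts i j \<ge> 0" using feas by blast
  have mass: "(\<Sum>i\<in>UNIV. \<Sum>j\<in>UNIV. ts i j) / (2 * \<eta>) \<le> M"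
    using dual_mass[OF a_pos b_pos tau_pos eta_pos C_nonneg t0 CS rs cs] by (simp add: M_def \<alpha>_def \<beta>_def)
  have rowT: "rowsum ts i \<le> (\<Sum>i\<in>UNIV. \<Sum>j\<in>UNIV. ts i j)" for i
    unfolding rowsum_def by (rule member_le_sum) (use t0 in \<open>auto intro: sum_nonneg\<close>)
  have colT: "colsum ts j \<le> (\<Sum>i\<in>UNIV. \<Sum>j\<in>UNIV. ts i j)" for j
    unfolding colsum_def by (rule sum_mono, rule member_le_sum) (use t0 in auto)
  have entT: "ts i j \<le> rowsum ts i" for i j
    unfolding rowsum_def by (rule member_le_sum) (use t0 in auto)
  have rle: "a i * exp (- us i / \<tau>) \<le> M" for i
  proof -
    have "rowsum ts i / (2 * \<eta>) \<le> (\<Sum>i\<in>UNIV. \<Sum>j\<in>UNIV. ts i j) / (2 * \<eta>)"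
      using rowT[of i] eta_pos by (intro divide_right_mono) auto
    thus ?thesis using rs mass by simp
  qed
  have cle: "b j * exp (- vs j / \<tau>) \<le> M" for j
  proof -
    have "colsum ts j / (2 * \<eta>) \<le> (\<Sum>i\<in>UNIV. \<Sum>j\<in>UNIV. ts i j) / (2 * \<eta>)"
      using colT[of j] eta_pos by (intro divide_right_mono) auto
    thus ?thesis using cs mass by simp
  qed
  have ui: "\<tau> * ln (a i / M) \<le> us i" for i using ii_lemma[OF _ M0 tau_pos rle] a_pos by blast
  have vj: "\<tau> * ln (b j / M) \<le> vs j" for j using ii_lemma[OF _ M0 tau_pos cle] b_pos by blast
  have ii1: "\<forall>i. us i \<ge> \<tau> * ln (2 * a i / (\<alpha> + \<beta>))"
  proof
    fix i have "2 * a i / (\<alpha> + \<beta>) = a i / M" by (simp add: M_def)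
    thus "us i \<ge> \<tau> * ln (2 * a i / (\<alpha> + \<beta>))" using ui[of i] by simp
  qed
  have ii2: "\<forall>j. vs j \<ge> \<tau> * ln (2 * b j / (\<alpha> + \<beta>))"
  proof
    fix j have "2 * b j / (\<alpha> + \<beta>) = b j / M" by (simp add: M_def)
    thus "vs j \<ge> \<tau> * ln (2 * b j / (\<alpha> + \<beta>))" using vj[of j] by simp
  qed
  have tle: "ts i j \<le> 2 * \<eta> * M" for i j
  proof -
    have "ts i j / (2 * \<eta>) \<le> rowsum ts i / (2 * \<eta>)"
      using entT[of i j] eta_pos by (intro divide_right_mono) auto
    hence "ts i j / (2 * \<eta>) \<le> M" using rs rle[of i] by simp
    thus ?thesis using eta_pos by (simp add: divide_le_eq algebra_simps)
  qed
  have iii1: "maxnorm_vec us \<le> D"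
  proof (rule maxvec_le, rule allI)
    fix i
    have lo: "- us i \<le> D" unfolding Deq
      by (rule lower_lemma[OF am(1) _ M0 tau_pos Cm0 _ ui]) (use am eta_pos in auto)
    have up: "us i \<le> D" unfolding Deq
      by (rule upper_lemma[OF bm(1) _ M0 tau_pos eta_pos vj[of i] _ CmC tle])
         (use bm feas in auto)
    show "\<bar>us i\<bar> \<le> D" using lo up by simp
  qed
  have iii2: "maxnorm_vec vs \<le> D"
  proof (rule maxvec_le, rule allI)
    fix j
    have lo: "- vs j \<le> D" unfolding Deq min.commute[of "ln amin"]
      by (rule lower_lemma[OF bm(1) _ M0 tau_pos Cm0 _ vj]) (use bm eta_pos in auto)
    have up: "vs j \<le> D" unfolding Deq min.commute[of "ln amin"]
      by (rule upper_lemma[OF am(1) _ M0 tau_pos eta_pos ui[of j] _ CmC tle[of j j]])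
         (use am feas in \<open>auto simp: add.commute\<close>)
    show "\<bar>vs j\<bar> \<le> D" using lo up by simp
  qed
  have br: "\<forall>e>0. 0 \<le> C i j + \<eta> * (2 * X\<eta> i j + e) + \<tau> * ln ((rowsum X\<eta> i + e) / a i) + \<tau> * ln ((colsum X\<eta> j + e) / b j)" for i j
    using primal_bracket[OF a_pos b_pos tau_pos _ Xe Xeo] eta_pos by auto
  have xle: "X\<eta> i j \<le> M" for i j using entry_le_row[OF Xe, of i j] row_le_norm1[OF Xe, of i] n1 by linarith
  have rle2: "rowsum X\<eta> i \<le> M" for i using row_le_norm1[OF Xe, of i] n1 by linarith
  have cle2: "colsum X\<eta> i \<le> M" for i using col_le_norm1[OF Xe, of i] n1 by linarith
  have xge: "X\<eta> i j \<ge> 0" for i j using Xe by (simp add: nonneg_mat_def)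
  have iv_r: "rowsum X\<eta> i \<ge> min amin bmin * exp (- D / \<tau>)" for i
    unfolding Deq
    by (rule iv_abstract[OF rowsum_nonneg[OF Xe] colsum_nonneg[OF Xe] cle2 xge xle CmC Cm0 am(1) bm(1)
          _ _ muM tau_pos eta_pos br[of i i]]) (use am bm in auto)
  have iv_c: "colsum X\<eta> j \<ge> min amin bmin * exp (- D / \<tau>)" for j
  proof -
    have br': "\<forall>e>0. 0 \<le> C j j + \<eta> * (2 * X\<eta> j j + e) + \<tau> * ln ((colsum X\<eta> j + e) / b j) + \<tau> * ln ((rowsum X\<eta> j + e) / a j)"
      using br[of j j] by (simp add: algebra_simps)
    have "colsum X\<eta> j \<ge> min bmin amin * exp (- (Cm + \<eta> * (2 * M) + \<tau> * ln M - \<tau> * min (ln bmin) (ln amin)) / \<tau>)"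
      by (rule iv_abstract[OF colsum_nonneg[OF Xe] rowsum_nonneg[OF Xe] rle2 xge xle CmC Cm0 bm(1) am(1)
          _ _ _ tau_pos eta_pos br']) (use am bm muM in auto)
    thus ?thesis unfolding Deq by (simp add: min.commute)
  qed
  have iv: "\<forall>i j. min (rowsum X\<eta> i) (colsum X\<eta> j) \<ge> min amin bmin * exp (- D / \<tau>)"
    using iv_r iv_c by simp
  show ?thesis using n1 n2 ii1 ii2 iii1 iii2 iv by (simp add: M_def)
qed


end
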